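(* Let $H:\mathcal{L}_{2e}^n\to\mathcal{L}_{2e}^n$ be a causal system, let $M=M^\top\in\mathbb{R}^{m\times m}$, and let $N$ be the causal, bounded LTI system with transfer function $N(s)=C_N(sI-A_N)^{-1}B_N+D_N$, where $A_N\in\mathbb{R}^{k\times k}$ is Hurwitz, $B_N\in\mathbb{R}^{k\times 2n}$, $C_N\in\mathbb{R}^{m\times k}$, $D_N\in\mathbb{R}^{m\times 2n}$. Suppose $H$ satisfies the hard incremental IQC with multipliers $(M,N)$. If there exist a symmetric matrix $\Pi\in\mathbb{R}^{2\times2}$, a matrix $P=P^\top\succeq 0$ and a number $\tau>0$ such that $$\begin{bmatrix} A_N^\top P+PA_N & PB_N\\ B_N^\top P & -\Pi\otimes I_n\end{bmatrix}+\tau V^\top M V\preceq 0,\qquad V=[C_N,\ D_N],$$ then $\mathrm{SRG}_e(H)$ is contained in $\mathcal{S}(\Pi)=\{z\in\mathbb{C}\mid [1;\ z]^*\,\Pi\,[1;\ z]\ge 0\}$.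
   Context: $\mathcal{L}_2^n$ is the space of square-integrable signals $u:[0,\infty)\to\mathbb{R}^n$ with norm $\|u\|=(\int_0^\infty u^\top u\,dt)^{1/2}$ and inner product $\langle u,y\rangle=\int_0^\infty u^\top y\,dt$; $\mathcal{L}_{2e}^n$ is the set of signals whose truncations $u_T$ ($u_T(t)=u(t)$ for $t\le T$, $0$ for $t>T$) lie in $\mathcal{L}_2^n$ for every $T\ge0$. A system is an operator $H:\mathcal{L}_{2e}^n\to\mathcal{L}_{2e}^n$ with $H0=0$; it is causal if $(Hu)_T=(Hu_T)_T$ for all $T\ge 0$ and $u$. The extended graph is $G_e(H)=\{(u,y)\in\mathcal{L}_{2e}^n\times\mathcal{L}_{2e}^n\mid y=Hu\}$. For $u,y\in\mathcal{L}_2^n$, the gain $\rho(u,y)$ is $\|y\|/\|u\|$ if $u\neq0$, $0$ if $u=y=0$, $\infty$ if $u=0\ne y$; the phase $\theta(u,y)=\arccos\frac{\langle u,y\rangle}{\|u\|\|y\|}$ if $u,y\ne0$, and $0$ otherwise; for $T>0$ set $\rho_T(u,y)=\rho(u_T,y_T)$, $\theta_T(u,y)=\theta(u_T,y_T)$. The hard scaled relative graph is $\mathrm{SRG}_e(H)=\{\rho_T(\Delta u,\Delta y)e^{\pm j\theta_T(\Delta u,\Delta y)}\mid (u_1,y_1),(u_2,y_2)\in G_e(H),\ (\Delta u)_T\ne0,\ T>0\}$ with $\Delta u=u_1-u_2$, $\Delta y=y_1-y_2$. $N$ acts on signals via its state-space realization $\dot x_N=A_Nx_N+B_N v$, $g=C_Nx_N+D_N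 v$ with $x_N(0)=0$. $H$ satisfies the hard incremental IQC with multipliers $(M,N)$ if $\int_0^T (N[\Delta u;\Delta y])^\top(t)\,M\,(N[\Delta u;\Delta y])(t)\,dt\ge 0$ for all $(u_1,y_1),(u_2,y_2)\in G_e(H)$ and all $T>0$. *)

theory Defs
  imports "HOL-Analysis.Analysis"
begin

text \<open>Signals are functions on the reals, taken to vanish for negative time
(so they live on [0, infinity)). L2e: measurable, and every truncation is square integrable.\<close>

definition L2e :: "(real \<Rightarrow> real^'n::finite) set" where
  "L2e = {u. u \<in> borel_measurable lborel \<and> (\<forall>t<0. u t = 0) \<and>
              (\<forall>T\<ge>0. set_integrable lborel {0..T} (\<lambda>t. (norm (u t))\<^sup>2))}"

definition trunc :: "real \<Rightarrow> (real \<Rightarrow> real^'n::finite) \<Rightarrow> (real \<Rightarrow> real^'n)" where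
  "trunc T u = (\<lambda>t. if t \<le> T then u t else 0)"

definition l2inner :: "(real \<Rightarrow> real^'n::finite) \<Rightarrow> (real \<Rightarrow> real^'n) \<Rightarrow> real" where
  "l2inner u y = (LINT t:{0..}|lborel. u t \<bullet> y t)"

definition l2norm :: "(real \<Rightarrow> real^'n::finite) \<Rightarrow> real" where
  "l2norm u = sqrt (l2inner u u)"

definition gain :: "(real \<Rightarrow> real^'n::finite) \<Rightarrow> (real \<Rightarrow> real^'n) \<Rightarrow> ereal" where
  "gain u y = (if l2norm u \<noteq> 0 then ereal (l2norm y / l2norm u)
               else if l2norm y = 0 then 0 else \<infinity>)"

definition phase :: "(real \<Rightarrow> real^'n::finite) \<Rightarrow> (real \<Rightarrow> real^'n) \<Rightarrow> real" where
  "phase u y = (if l2norm u \<noteq> 0 \<and> l2norm y \<noteq> 0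
                then arccos (l2inner u y / (l2norm u * l2norm y)) else 0)"

definition causal :: "((real \<Rightarrow> real^'n::finite) \<Rightarrow> (real \<Rightarrow> real^'n)) \<Rightarrow> bool" where
  "causal H \<longleftrightarrow> (\<forall>u\<in>L2e. \<forall>T\<ge>0. trunc T (H u) = trunc T (H (trunc T u)))"

definition is_system :: "((real \<Rightarrow> real^'n::finite) \<Rightarrow> (real \<Rightarrow> real^'n)) \<Rightarrow> bool" where
  "is_system H \<longleftrightarrow> (\<forall>u\<in>L2e. H u \<in> L2e) \<and> H (\<lambda>t. 0) = (\<lambda>t. 0)"

definition ext_graph :: "((real \<Rightarrow> real^'n::finite) \<Rightarrow> (real \<Rightarrow> real^'n))
    \<Rightarrow> ((real \<Rightarrow> real^'n) \<times> (real \<Rightarrow> real^'n)) set" where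
  "ext_graph H = {(u, H u) | u. u \<in> L2e}"

text \<open>Hard scaled relative graph (the gain is finite here since the truncated
input difference is nonzero).\<close>
definition SRGe :: "((real \<Rightarrow> real^'n::finite) \<Rightarrow> (real \<Rightarrow> real^'n)) \<Rightarrow> complex set" where
  "SRGe H = {complex_of_real (real_of_ereal (gain (trunc T (\<lambda>t. u1 t - u2 t)) (trunc T (\<lambda>t. y1 t - y2 t))))
               * cis (s * phase (trunc T (\<lambda>t. u1 t - u2 t)) (trunc T (\<lambda>t. y1 t - y2 t)))
             | u1 y1 u2 y2 T s. (u1, y1) \<in> ext_graph H \<and> (u2, y2) \<in> ext_graph H
                 \<and> l2norm (trunc T (\<lambda>t. u1 t - u2 t)) \<noteq> 0 \<and> T > 0 \<and> s \<in> {1, -1}}"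

definition nsd :: "real^'a::finite^'a \<Rightarrow> bool" where
  "nsd Q \<longleftrightarrow> (\<forall>x. x \<bullet> (Q *v x) \<le> 0)"

definition psd :: "real^'a::finite^'a \<Rightarrow> bool" where
  "psd Q \<longleftrightarrow> (\<forall>x. 0 \<le> x \<bullet> (Q *v x))"

definition hurwitz :: "real^'k::finite^'k \<Rightarrow> bool" where
  "hurwitz A \<longleftrightarrow> (\<forall>(ev::complex) (w::complex^'k). w \<noteq> 0 \<and>
       (\<chi> i. \<Sum>j\<in>UNIV. complex_of_real (A $ i $ j) * w $ j) = ev *s w \<longrightarrow> Re ev < 0)"

text \<open>Vectors in R^(2n) are indexed by the sum type 'n + 'n (first block Inl, second block Inr).\<close>
definition stack :: "real^'n::finite \<Rightarrow> real^'n \<Rightarrow> real^('n + 'n)" where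
  "stack a b = (\<chi> i. case i of Inl j \<Rightarrow> a $ j | Inr j \<Rightarrow> b $ j)"

definition blk :: "'n::finite + 'n \<Rightarrow> 2" where
  "blk i = (case i of Inl _ \<Rightarrow> 1 | Inr _ \<Rightarrow> 2)"

definition idx :: "'n::finite + 'n \<Rightarrow> 'n" where
  "idx i = (case i of Inl j \<Rightarrow> j | Inr j \<Rightarrow> j)"

definition kron_I :: "real^2^2 \<Rightarrow> real^('n::finite + 'n)^('n + 'n)" where
  "kron_I Pm = (\<chi> a b. Pm $ blk a $ blk b * (if idx a = idx b then 1 else 0))"

definition lmi_block :: "real^'k::finite^'k \<Rightarrow> real^('n::finite + 'n)^'k \<Rightarrow> real^'k^'k \<Rightarrow> real^2^2
      \<Rightarrow> real^('k + ('n + 'n))^('k + ('n + 'n))" where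
  "lmi_block A B P Pm = (\<chi> a b. case (a, b) of
      (Inl i, Inl j) \<Rightarrow> (transpose A ** P + P ** A) $ i $ j
    | (Inl i, Inr j) \<Rightarrow> (P ** B) $ i $ j
    | (Inr i, Inl j) \<Rightarrow> (transpose B ** P) $ i $ j
    | (Inr i, Inr j) \<Rightarrow> - (kron_I Pm) $ i $ j)"

definition hcat :: "real^'k::finite^'m::finite \<Rightarrow> real^'c::finite^'m \<Rightarrow> real^('k + 'c)^'m" where
  "hcat C D = (\<chi> r c. case c of Inl j \<Rightarrow> C $ r $ j | Inr j \<Rightarrow> D $ r $ j)"

text \<open>The region S(Pm): [1; z]^* Pm [1; z] \<ge> 0 (in the complex numbers: real and nonnegative).\<close>
definition S_region :: "real^2^2 \<Rightarrow> complex set" where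
  "S_region Pm = {z. let w = (vector [1, z] :: complex^2);
                      q = (\<Sum>i\<in>UNIV. \<Sum>j\<in>UNIV. cnj (w $ i) * complex_of_real (Pm $ i $ j) * w $ j)
                  in Im q = 0 \<and> 0 \<le> Re q}"

text \<open>x is the state of dx/dt = A x + B v, x(0) = 0 (absolutely continuous / integral form).\<close>
definition lti_state :: "real^'k::finite^'k \<Rightarrow> real^'c::finite^'k \<Rightarrow> (real \<Rightarrow> real^'c) \<Rightarrow> (real \<Rightarrow> real^'k) \<Rightarrow> bool" where
  "lti_state A B v x \<longleftrightarrow> x 0 = 0 \<and>
     (\<forall>t\<ge>0. ((\<lambda>s. A *v x s + B *v v s) has_integral x t) {0..t})"

definition lti_output :: "real^'k::finite^'k \<Rightarrow> real^'c::finite^'k \<Rightarrow> real^'k^'m::finite \<Rightarrow> real^'c^'m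
      \<Rightarrow> (real \<Rightarrow> real^'c) \<Rightarrow> (real \<Rightarrow> real^'m) \<Rightarrow> bool" where
  "lti_output A B C D v g \<longleftrightarrow>
     (\<exists>x. lti_state A B v x \<and> (\<forall>t\<ge>0. g t = C *v x t + D *v v t))"

definition hard_incr_IQC :: "((real \<Rightarrow> real^'n::finite) \<Rightarrow> (real \<Rightarrow> real^'n)) \<Rightarrow> real^'m::finite^'m
      \<Rightarrow> real^'k::finite^'k \<Rightarrow> real^('n + 'n)^'k \<Rightarrow> real^'k^'m \<Rightarrow> real^('n + 'n)^'m \<Rightarrow> bool" where
  "hard_incr_IQC H M A B C D \<longleftrightarrow>
     (\<forall>u1 y1 u2 y2 g T. (u1, y1) \<in> ext_graph H \<and> (u2, y2) \<in> ext_graph H \<and> T > 0 \<and>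
        lti_output A B C D (\<lambda>t. stack (u1 t - u2 t) (y1 t - y2 t)) g \<longrightarrow>
        0 \<le> (LINT t:{0..T}|lborel. g t \<bullet> (M *v g t)))"

end

theory Submission
  imports Defs
begin



lemma integrable_mult_ind:
  fixes h :: "real \<Rightarrow> real"
  assumes "integrable lborel h" "S \<in> sets borel"
  shows "integrable lborel (\<lambda>r. h r * indicator S r)"
  using integrable_mult_indicator[of S lborel h] assms by (simp add: mult.commute)

lemma by_parts_L1:
  fixes f h :: "real \<Rightarrow> real" and t :: real
  assumes f: "set_integrable lborel {0..t} f" and h: "set_integrable lborel {0..t} h"
  shows "set_integrable lborel {0..t} (\<lambda>s. f s * (LINT r:{0..s}|lborel. h r))"
    and "set_integrable lborel {0..t} (\<lambda>s. (LINT r:{0..s}|lborel. f r) * h s)"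
    and "(LINT s:{0..t}|lborel. f s * (LINT r:{0..s}|lborel. h r))
       + (LINT s:{0..t}|lborel. (LINT r:{0..s}|lborel. f r) * h s)
       = (LINT r:{0..t}|lborel. f r) * (LINT r:{0..t}|lborel. h r)"
proof -
  define f' where "f' = (\<lambda>s. indicator {0..t} s * f s)"
  define h' where "h' = (\<lambda>s. indicator {0..t} s * h s)"
  have fi: "integrable lborel f'" using f by (simp add: f'_def set_integrable_def)
  have hi: "integrable lborel h'" using h by (simp add: h'_def set_integrable_def)
  have fm[measurable]: "f' \<in> borel_measurable lborel" using fi by auto
  have hm[measurable]: "h' \<in> borel_measurable lborel" using hi by auto
  have Qm: "(\<lambda>(s,r). f' s * h' r) \<in> borel_measurable (lborel \<Otimes>\<^sub>M lborel)"
    by measurable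
  have Qi: "integrable (lborel \<Otimes>\<^sub>M lborel) (\<lambda>(s,r). f' s * h' r)"
  proof (rule lborel_pair.Fubini_integrable[OF Qm])
    show "integrable lborel (\<lambda>x. LBINT y. norm (case (x, y) of (s, r) \<Rightarrow> f' s * h' r))"
      by (simp add: abs_mult integrable_abs fi)
    show "AE x in lborel. integrable lborel (\<lambda>y. case (x, y) of (s, r) \<Rightarrow> f' s * h' r)"
      by (simp add: hi)
  qed
  have Q1i: "integrable (lborel \<Otimes>\<^sub>M lborel) (\<lambda>(s,r). f' s * (h' r * indicator {..s} r))"
    apply (rule Bochner_Integration.integrable_bound[OF Qi])
     apply measurable
    apply (auto simp: indicator_def abs_mult)
    done
  have Q2i: "integrable (lborel \<Otimes>\<^sub>M lborel) (\<lambda>(s,r). f' s * (h' r * indicator {s<..} r))"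
    apply (rule Bochner_Integration.integrable_bound[OF Qi])
     apply measurable
    apply (auto simp: indicator_def abs_mult)
    done
  define g1 where "g1 = (\<lambda>s. LBINT r. h' r * indicator {..s} r)"
  define g2 where "g2 = (\<lambda>s. LBINT r. h' r * indicator {s<..} r)"
  have g1i: "integrable lborel (\<lambda>s. f' s * g1 s)"
    using lborel_pair.integrable_fst[OF Q1i] by (simp add: g1_def)
  have g2i: "integrable lborel (\<lambda>s. f' s * g2 s)"
    using lborel_pair.integrable_fst[OF Q2i] by (simp add: g2_def)
  have g12: "g1 s + g2 s = (LBINT r. h' r)" for s
  proof -
    have "g1 s + g2 s = (LBINT r. h' r * indicator {..s} r + h' r * indicator {s<..} r)"
      unfolding g1_def g2_def
      by (rule Bochner_Integration.integral_add[symmetric]) (auto intro!: integrable_mult_ind hi)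
    also have "\<dots> = (LBINT r. h' r)"
      by (rule Bochner_Integration.integral_cong) (auto simp: indicator_def)
    finally show ?thesis .
  qed
  have G: "(LINT r:{0..s}|lborel. h r) = g1 s" if "s \<in> {0..t}" for s
    unfolding g1_def h'_def set_lebesgue_integral_def
    by (rule Bochner_Integration.integral_cong) (use that in \<open>auto simp: indicator_def\<close>)
  have F: "(LINT r:{0..s}|lborel. f r) = (LBINT r. f' r * indicator {..<s} r)" if "s \<in> {0..t}" for s
  proof -
    have "(LINT r:{0..s}|lborel. f r) = (LBINT r. f' r * indicator {0..s} r)"
      unfolding f'_def set_lebesgue_integral_def
      by (rule Bochner_Integration.integral_cong) (use that in \<open>auto simp: indicator_def\<close>)
    also have "\<dots> = (LBINT r. f' r * indicator {..<s} r)"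
      apply (rule integral_cong_AE)
        apply measurable
      using AE_lborel_singleton[of s]
      apply eventually_elim
      using that by (auto simp: indicator_def f'_def)
    finally have "(LINT r:{0..s}|lborel. f r) = (LBINT r. f' r * indicator {..<s} r)" .
    then show ?thesis .
  qed
  have E1: "(\<lambda>s. indicator {0..t} s *\<^sub>R (f s * (LINT r:{0..s}|lborel. h r))) = (\<lambda>s. f' s * g1 s)"
    using G by (auto simp: fun_eq_iff f'_def indicator_def)
  show "set_integrable lborel {0..t} (\<lambda>s. f s * (LINT r:{0..s}|lborel. h r))"
    unfolding set_integrable_def E1 by (rule g1i)
  have I1: "(LINT s:{0..t}|lborel. f s * (LINT r:{0..s}|lborel. h r)) = (LBINT s. f' s * g1 s)"
    unfolding set_lebesgue_integral_def[of lborel "{0..t}"] E1 ..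
  define F2 where "F2 = (\<lambda>s. LBINT r. f' r * indicator {..<s} r)"
  have E2: "(\<lambda>s. indicator {0..t} s *\<^sub>R ((LINT r:{0..s}|lborel. f r) * h s)) = (\<lambda>s. h' s * F2 s)"
    using F by (auto simp: fun_eq_iff h'_def indicator_def F2_def)
  have E3: "(\<lambda>r. LBINT s. f' s * (h' r * indicator {s<..} r)) = (\<lambda>r. h' r * F2 r)"
  proof
    fix r
    have "(LBINT s. f' s * (h' r * indicator {s<..} r)) = (LBINT s. h' r * (f' s * indicator {..<r} s))"
      by (rule Bochner_Integration.integral_cong) (auto simp: indicator_def)
    also have "\<dots> = h' r * F2 r" unfolding F2_def by (rule integral_mult_right_zero)
    finally show "(LBINT s. f' s * (h' r * indicator {s<..} r)) = h' r * F2 r" .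
  qed
  have hF2: "integrable lborel (\<lambda>r. h' r * F2 r)"
    using lborel_pair.integrable_snd[OF Q2i] E3 by simp
  show "set_integrable lborel {0..t} (\<lambda>s. (LINT r:{0..s}|lborel. f r) * h s)"
    unfolding set_integrable_def E2 by (rule hF2)
  have I2: "(LINT s:{0..t}|lborel. (LINT r:{0..s}|lborel. f r) * h s) = (LBINT s. f' s * g2 s)"
  proof -
    have "(LINT s:{0..t}|lborel. (LINT r:{0..s}|lborel. f r) * h s) = (LBINT r. h' r * F2 r)"
      unfolding set_lebesgue_integral_def[of lborel "{0..t}"] E2 ..
    also have "\<dots> = (LBINT r. LBINT s. f' s * (h' r * indicator {s<..} r))"
      unfolding E3 ..
    also have "\<dots> = (LBINT s. LBINT r. f' s * (h' r * indicator {s<..} r))"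
      by (rule lborel_pair.Fubini_integral[OF Q2i])
    also have "\<dots> = (LBINT s. f' s * g2 s)"
      unfolding g2_def by (simp add: integral_mult_right_zero)
    finally show ?thesis .
  qed
  have "(LBINT s. f' s * g1 s) + (LBINT s. f' s * g2 s) = (LBINT s. f' s * g1 s + f' s * g2 s)"
    by (rule Bochner_Integration.integral_add[symmetric]) (use g1i g2i in auto)
  also have "\<dots> = (LBINT s. f' s * (LBINT r. h' r))"
    by (simp add: g12 distrib_left[symmetric])
  also have "\<dots> = (LBINT s. f' s) * (LBINT r. h' r)"
    by (rule integral_mult_left_zero)
  finally show "(LINT s:{0..t}|lborel. f s * (LINT r:{0..s}|lborel. h r))
       + (LINT s:{0..t}|lborel. (LINT r:{0..s}|lborel. f r) * h s)
       = (LINT r:{0..t}|lborel. f r) * (LINT r:{0..t}|lborel. h r)"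
    unfolding I1 I2 by (simp add: set_lebesgue_integral_def f'_def h'_def)
qed


primrec picard :: "real^'k::finite^'k \<Rightarrow> (real \<Rightarrow> real^'k) \<Rightarrow> nat \<Rightarrow> real \<Rightarrow> real^'k" where
  "picard A b 0 = (\<lambda>t. integral {0..t} b)"
| "picard A b (Suc n) = (\<lambda>t. integral {0..t} (\<lambda>s. A *v picard A b n s))"

lemma mv_cont: "continuous_on S f \<Longrightarrow> continuous_on S (\<lambda>s. (A::real^'k::finite^'m::finite) *v f s)"
  using bounded_linear.continuous_on[OF matrix_vector_mul_bounded_linear] by blast

lemma picard_cont:
  assumes bi: "\<And>t. b integrable_on {0..t}"
  shows "continuous_on {0..T} (picard A b n)"
proof (induction n)
  case 0
  show ?case using indefinite_integral_continuous_1[OF bi[of T]] by simp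
next
  case (Suc n)
  have "(\<lambda>s. A *v picard A b n s) integrable_on {0..T}"
    by (rule integrable_continuous_real[OF mv_cont[OF Suc]])
  then show ?case using indefinite_integral_continuous_1 by simp
qed

lemma picard_int:
  assumes bi: "\<And>t. b integrable_on {0..t}"
  shows "(\<lambda>s. A *v picard A b n s) integrable_on {0..T}"
  by (rule integrable_continuous_real[OF mv_cont[OF picard_cont[OF bi]]])

lemma poly_integral:
  fixes a c t :: real
  assumes "0 \<le> t"
  shows "((\<lambda>s. c * (a * s)^n / fact n * a) has_integral c * (a * t)^(Suc n) / fact (Suc n)) {0..t}"
proof -
  define K where "K = c * a^(Suc n) / fact (Suc n)"
  have K1: "K * real (Suc n) = c * a^(Suc n) / fact n"
    unfolding K_def by (simp add: fact_Suc del: of_nat_Suc)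
  have K2: "c * (a * s)^n / fact n * a = K * (real (Suc n) * s^n)" for s
  proof -
    have "K * (real (Suc n) * s^n) = c * a^(Suc n) / fact n * s^n"
      unfolding mult.assoc[symmetric] K1 ..
    then show ?thesis by (simp add: power_mult_distrib mult_ac)
  qed
  have K3: "c * (a * t)^(Suc n) / fact (Suc n) = K * t^(Suc n) - K * 0^(Suc n)"
    unfolding K_def by (simp add: power_mult_distrib)
  have "((\<lambda>s. K * (real (Suc n) * s^n)) has_integral K * t^(Suc n) - K * 0^(Suc n)) {0..t}"
  proof (rule fundamental_theorem_of_calculus[OF assms, where f="\<lambda>s. K * s^(Suc n)"])
    fix x :: real assume "x \<in> {0..t}"
    have "((\<lambda>s. K * s^(Suc n)) has_real_derivative K * (real (Suc n) * x^n)) (at x within {0..t})"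
      by (intro DERIV_cmult DERIV_pow[THEN DERIV_cong]) auto
    then show "((\<lambda>s. K * s^(Suc n)) has_vector_derivative K * (real (Suc n) * x^n)) (at x within {0..t})"
      by (simp add: has_real_derivative_iff_has_vector_derivative)
  qed
  then show ?thesis unfolding K2 K3 .
qed

lemma lti_exists:
  fixes A :: "real^'k::finite^'k" and b :: "real \<Rightarrow> real^'k"
  assumes bi: "\<And>t. b integrable_on {0..t}" and nbi: "\<And>t. (\<lambda>s. norm (b s)) integrable_on {0..t}"
  shows "\<exists>x. x 0 = 0 \<and> (\<forall>t\<ge>0. ((\<lambda>s. A *v x s + b s) has_integral x t) {0..t})"
proof -
  obtain a where apos: "a > 0" and aA: "\<And>y. norm (A *v y) \<le> norm y * a"
    using bounded_linear.pos_bounded[OF matrix_vector_mul_bounded_linear[of A]] by blast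
  define \<beta> where "\<beta> = (\<lambda>t. integral {0..t} (\<lambda>s. norm (b s)))"
  have \<beta>mono: "\<beta> s \<le> \<beta> t" if "s \<le> t" for s t
    unfolding \<beta>_def using that by (intro integral_subset_le nbi) auto
  have \<beta>nn: "0 \<le> \<beta> t" for t
    unfolding \<beta>_def by (rule integral_nonneg[OF nbi]) auto
  have bound: "norm (picard A b n t) \<le> \<beta> t * (a * t)^n / fact n" if "0 \<le> t" for n t
    using that
  proof (induction n arbitrary: t)
    case 0
    then show ?case unfolding \<beta>_def using integral_norm_bound_integral[OF bi nbi] by simp
  next
    case (Suc n)
    have "norm (picard A b (Suc n) t) \<le> integral {0..t} (\<lambda>s. \<beta> t * (a * s)^n / fact n * a)"
      unfolding picard.simps
    proof (rule integral_norm_bound_integral[OF picard_int[OF bi]])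
      show "(\<lambda>s. \<beta> t * (a * s)^n / fact n * a) integrable_on {0..t}"
        using poly_integral[OF Suc.prems] by blast
      fix s assume s: "s \<in> {0..t}"
      have "norm (A *v picard A b n s) \<le> norm (picard A b n s) * a" by (rule aA)
      also have "\<dots> \<le> (\<beta> s * (a * s)^n / fact n) * a"
        using Suc.IH[of s] s apos by (intro mult_right_mono) auto
      also have "\<dots> \<le> (\<beta> t * (a * s)^n / fact n) * a"
        using \<beta>mono[of s t] s apos
        by (intro mult_right_mono divide_right_mono mult_right_mono) auto
      finally show "norm (A *v picard A b n s) \<le> \<beta> t * (a * s)^n / fact n * a" .
    qed
    also have "\<dots> = \<beta> t * (a * t)^(Suc n) / fact (Suc n)"
      using poly_integral[OF Suc.prems] by blast
    finally show ?case .
  qed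
  define E where "E = (\<lambda>t. \<lambda>n. \<beta> t * (a * t)^n / fact n)"
  have Esum: "summable (E t)" for t
    unfolding E_def using summable_mult[OF summable_exp[of "a * t"], of "\<beta> t"]
    by (simp add: divide_inverse mult_ac)
  have Enn: "0 \<le> E t n" if "0 \<le> t" for t n
    unfolding E_def using that apos \<beta>nn by simp
  have psum: "summable (\<lambda>n. norm (picard A b n t))" if "0 \<le> t" for t
    by (rule summable_comparison_test'[OF Esum[of t]]) (use bound[OF that] in \<open>simp add: E_def\<close>)
  define x where "x = (\<lambda>t. \<Sum>n. picard A b n t)"
  have xs: "(\<lambda>n. picard A b n t) sums x t" if "0 \<le> t" for t
    unfolding x_def using summable_norm_cancel[OF psum[OF that]] by (simp add: summable_sums)
  have p0: "picard A b n 0 = 0" for n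
    by (cases n) auto
  have x0: "x 0 = 0" unfolding x_def p0 by simp
  have main: "((\<lambda>s. A *v x s) has_integral (x t - picard A b 0 t)) {0..t}" if t: "0 \<le> t" for t
  proof -
    define fN where "fN = (\<lambda>N s. \<Sum>n<N. A *v picard A b n s)"
    define hb where "hb = (\<lambda>s::real. suminf (E t) * a)"
    have fNi: "fN N integrable_on {0..t}" for N
      unfolding fN_def by (intro integrable_sum picard_int[OF bi]) auto
    have hbi: "hb integrable_on {0..t}" unfolding hb_def by (rule integrable_const_ivl)
    have le: "norm (fN N s) \<le> hb s" if s: "s \<in> {0..t}" for N s
    proof -
      have "norm (fN N s) = norm (A *v (\<Sum>n<N. picard A b n s))"
        by (simp only: fN_def vec.sum)
      also have "\<dots> \<le> norm (\<Sum>n<N. picard A b n s) * a" by (rule aA)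
      also have "\<dots> \<le> (\<Sum>n<N. E t n) * a"
      proof (intro mult_right_mono)
        have "norm (\<Sum>n<N. picard A b n s) \<le> (\<Sum>n<N. norm (picard A b n s))"
          by (rule norm_sum)
        also have "\<dots> \<le> (\<Sum>n<N. E t n)"
        proof (intro sum_mono)
          fix n
          have "norm (picard A b n s) \<le> \<beta> s * (a * s)^n / fact n" using bound[of s n] s by auto
          also have "\<dots> \<le> E t n"
          proof -
            have p: "(a * s)^n \<le> (a * t)^n" using s apos by (intro power_mono mult_left_mono) auto
            have "\<beta> s * (a * s)^n \<le> \<beta> t * (a * t)^n"
              using p \<beta>mono[of s t] s \<beta>nn[of t] apos by (intro mult_mono) auto
            then show ?thesis unfolding E_def by (simp add: divide_right_mono)
          qed
          finally show "norm (picard A b n s) \<le> E t n" .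
        qed
        finally show "norm (\<Sum>n<N. picard A b n s) \<le> (\<Sum>n<N. E t n)" .
      qed (use apos in auto)
      also have "\<dots> \<le> suminf (E t) * a"
      proof (rule mult_right_mono)
        show "(\<Sum>n<N. E t n) \<le> suminf (E t)"
          by (rule sum_le_suminf[OF Esum]) (auto intro: Enn[OF t])
      qed (use apos in auto)
      finally show ?thesis unfolding hb_def .
    qed
    have conv: "(\<lambda>N. fN N s) \<longlonglongrightarrow> A *v x s" if s: "s \<in> {0..t}" for s
    proof -
      have "(\<lambda>N. \<Sum>n<N. picard A b n s) \<longlonglongrightarrow> x s"
        using xs[of s] s by (simp add: sums_def)
      then have "(\<lambda>N. A *v (\<Sum>n<N. picard A b n s)) \<longlonglongrightarrow> A *v x s"
        by (rule bounded_linear.tendsto[OF matrix_vector_mul_bounded_linear])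
      then show ?thesis by (simp only: fN_def vec.sum)
    qed
    note DC = dominated_convergence[OF fNi hbi le conv]
    have intN: "integral {0..t} (fN N) = (\<Sum>n<N. picard A b (Suc n) t)" for N
      unfolding fN_def using integral_sum[of "{..<N}" "\<lambda>n s. A *v picard A b n s" "{0..t}"] picard_int[OF bi] by simp
    have "(\<lambda>N. \<Sum>n<N. picard A b (Suc n) t) \<longlonglongrightarrow> x t - picard A b 0 t"
    proof -
      have "(\<lambda>n. picard A b (Suc n) t) sums (x t - picard A b 0 t)"
        by (subst sums_Suc_iff) (simp add: xs[OF t])
      then show ?thesis by (simp add: sums_def)
    qed
    then have L: "(\<lambda>N. integral {0..t} (fN N)) \<longlonglongrightarrow> x t - picard A b 0 t"
      unfolding intN .
    have "integral {0..t} (\<lambda>s. A *v x s) = x t - picard A b 0 t"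
      by (rule LIMSEQ_unique[OF DC(2) L])
    with DC(1) show ?thesis using integrable_integral by fastforce
  qed
  show ?thesis
  proof (intro exI conjI allI impI)
    show "x 0 = 0" by (rule x0)
    fix t :: real assume t: "0 \<le> t"
    have "((\<lambda>s. A *v x s + b s) has_integral (x t - picard A b 0 t) + integral {0..t} b) {0..t}"
      by (intro has_integral_add main[OF t] integrable_integral bi)
    then show "((\<lambda>s. A *v x s + b s) has_integral x t) {0..t}" by simp
  qed
qed


definition L2on :: "real \<Rightarrow> (real \<Rightarrow> real) \<Rightarrow> bool" where
  "L2on T w \<longleftrightarrow> set_borel_measurable lborel {0..T} w \<and> set_integrable lborel {0..T} (\<lambda>t. (w t)\<^sup>2)"

lemma set_integrable_sum:
  fixes f :: "'i \<Rightarrow> 'a \<Rightarrow> real"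
  assumes "finite I" "\<And>i. i \<in> I \<Longrightarrow> set_integrable M A (f i)"
  shows "set_integrable M A (\<lambda>x. \<Sum>i\<in>I. f i x)"
  unfolding set_integrable_def scaleR_sum_right
  by (rule Bochner_Integration.integrable_sum) (use assms in \<open>simp add: set_integrable_def\<close>)

lemma set_integral_sum:
  fixes f :: "'i \<Rightarrow> 'a \<Rightarrow> real"
  assumes "finite I" "\<And>i. i \<in> I \<Longrightarrow> set_integrable M A (f i)"
  shows "(LINT x:A|M. (\<Sum>i\<in>I. f i x)) = (\<Sum>i\<in>I. LINT x:A|M. f i x)"
  unfolding set_lebesgue_integral_def scaleR_sum_right
  by (rule Bochner_Integration.integral_sum) (use assms in \<open>simp add: set_integrable_def\<close>)

lemma sbm_mult:
  fixes f g :: "real \<Rightarrow> real"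
  assumes "set_borel_measurable lborel S f" "set_borel_measurable lborel S g"
  shows "set_borel_measurable lborel S (\<lambda>t. f t * g t)"
proof -
  have "(\<lambda>t. indicator S t *\<^sub>R (f t * g t)) = (\<lambda>t. (indicator S t *\<^sub>R f t) * (indicator S t *\<^sub>R g t))"
    by (auto simp: indicator_def)
  then show ?thesis using assms unfolding set_borel_measurable_def by (simp del: scaleR_conv_of_real)
qed

lemma sbm_add:
  fixes f g :: "real \<Rightarrow> real"
  assumes "set_borel_measurable lborel S f" "set_borel_measurable lborel S g"
  shows "set_borel_measurable lborel S (\<lambda>t. f t + g t)"
proof -
  have "(\<lambda>t. indicator S t *\<^sub>R (f t + g t)) = (\<lambda>t. (indicator S t *\<^sub>R f t) + (indicator S t *\<^sub>R g t))"
    by (auto simp: indicator_def)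
  then show ?thesis using assms unfolding set_borel_measurable_def by (simp del: scaleR_conv_of_real)
qed

lemma sbm_const:
  "set_borel_measurable lborel S (\<lambda>t. c::real)" if "S \<in> sets borel"
  using that unfolding set_borel_measurable_def by measurable

lemma L2on_prod:
  assumes f: "L2on T f" and g: "L2on T g"
  shows "set_integrable lborel {0..T} (\<lambda>t. f t * g t)"
proof (rule set_integrable_bound)
  show "set_integrable lborel {0..T} (\<lambda>t. (f t)\<^sup>2 + (g t)\<^sup>2)"
    using f g unfolding L2on_def by auto
  show "set_borel_measurable lborel {0..T} (\<lambda>t. f t * g t)"
    using f g unfolding L2on_def by (intro sbm_mult) auto
  show "AE x in lborel. x \<in> {0..T} \<longrightarrow> norm (f x * g x) \<le> norm ((f x)\<^sup>2 + (g x)\<^sup>2)"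
  proof (intro AE_I2 impI)
    fix x
    have h: "0 \<le> (\<bar>f x\<bar> - \<bar>g x\<bar>)\<^sup>2" by simp
    have e: "(\<bar>f x\<bar> - \<bar>g x\<bar>)\<^sup>2 = (f x)\<^sup>2 + (g x)\<^sup>2 - 2 * (\<bar>f x\<bar> * \<bar>g x\<bar>)"
      by (simp add: power2_diff)
    have p: "0 \<le> \<bar>f x\<bar> * \<bar>g x\<bar>" by simp
    have "\<bar>f x\<bar> * \<bar>g x\<bar> \<le> (f x)\<^sup>2 + (g x)\<^sup>2"
      using h e p by linarith
    then show "norm (f x * g x) \<le> norm ((f x)\<^sup>2 + (g x)\<^sup>2)" by (simp add: abs_mult)
  qed
qed

lemma L2on_add:
  assumes f: "L2on T f" and g: "L2on T g"
  shows "L2on T (\<lambda>t. f t + g t)"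
proof -
  have "set_integrable lborel {0..T} (\<lambda>t. (f t)\<^sup>2 + 2 * (f t * g t) + (g t)\<^sup>2)"
    using f g L2on_prod[OF f g] unfolding L2on_def by auto
  moreover have "(\<lambda>t. (f t + g t)\<^sup>2) = (\<lambda>t. (f t)\<^sup>2 + 2 * (f t * g t) + (g t)\<^sup>2)"
    by (simp add: fun_eq_iff power2_sum algebra_simps)
  ultimately have "set_integrable lborel {0..T} (\<lambda>t. (f t + g t)\<^sup>2)"
    by simp
  then show ?thesis using f g unfolding L2on_def by (auto intro: sbm_add)
qed

lemma L2on_scale:
  assumes f: "L2on T f"
  shows "L2on T (\<lambda>t. c * f t)"
proof -
  have "set_integrable lborel {0..T} (\<lambda>t. c\<^sup>2 * (f t)\<^sup>2)"
    using f unfolding L2on_def by auto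
  then have "set_integrable lborel {0..T} (\<lambda>t. (c * f t)\<^sup>2)"
    by (simp add: power_mult_distrib)
  moreover have "set_borel_measurable lborel {0..T} (\<lambda>t. c * f t)"
    using f unfolding L2on_def by (intro sbm_mult sbm_const) auto
  ultimately show ?thesis using f unfolding L2on_def by auto
qed

lemma L2on_zero: "L2on T (\<lambda>t. 0)"
  unfolding L2on_def set_borel_measurable_def set_integrable_def by simp

lemma L2on_sum:
  assumes "finite I" "\<And>i. i \<in> I \<Longrightarrow> L2on T (f i)"
  shows "L2on T (\<lambda>t. \<Sum>i\<in>I. f i t)"
  using assms by (induction I rule: finite_induct) (auto intro: L2on_add L2on_zero)

lemma L2on_cont:
  assumes "continuous_on {0..T} f"
  shows "L2on T f"
proof -
  have "continuous_on {0..T} (\<lambda>t. (f t)\<^sup>2)"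
    using assms by (intro continuous_intros)
  then have "set_integrable lborel {0..T} (\<lambda>t. (f t)\<^sup>2)"
    by (rule borel_integrable_atLeastAtMost')
  moreover have "set_borel_measurable lborel {0..T} f"
    using set_measurable_continuous_on[OF _ assms] unfolding set_borel_measurable_def by simp
  ultimately show ?thesis unfolding L2on_def by simp
qed

lemma L2on_L1:
  assumes "L2on T f"
  shows "set_integrable lborel {0..T} f"
  using L2on_prod[OF assms L2on_cont[of T "\<lambda>t. 1"]] by simp

definition L2v :: "real \<Rightarrow> (real \<Rightarrow> real^'a::finite) \<Rightarrow> bool" where
  "L2v T w \<longleftrightarrow> (\<forall>i. L2on T (\<lambda>t. w t $ i))"

lemma L2v_add: "L2v T f \<Longrightarrow> L2v T g \<Longrightarrow> L2v T (\<lambda>t. f t + g t)"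
  unfolding L2v_def by (auto intro: L2on_add)

lemma L2v_mv: "L2v T f \<Longrightarrow> L2v T (\<lambda>t. (M::real^'a::finite^'b::finite) *v f t)"
  unfolding L2v_def matrix_vector_mult_def by (auto intro!: L2on_sum L2on_scale)

lemma L2v_inner:
  assumes "L2v T f" "L2v T g"
  shows "set_integrable lborel {0..T} (\<lambda>t. f t \<bullet> g t)"
  using assms unfolding L2v_def inner_vec_def
  by (auto intro!: set_integrable_sum L2on_prod)

lemma L2v_cont:
  assumes "continuous_on {0..T} f"
  shows "L2v T f"
  unfolding L2v_def
  using bounded_linear.continuous_on[OF bounded_linear_vec_nth assms] by (auto intro: L2on_cont)

lemma sbm_vec:
  fixes w :: "real \<Rightarrow> real^'a::finite"
  assumes "\<And>i. set_borel_measurable lborel S (\<lambda>t. w t $ i)"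
  shows "set_borel_measurable lborel S w"
  unfolding set_borel_measurable_def
proof (rule borel_measurable_euclidean_space[THEN iffD2], rule ballI)
  fix b :: "real^'a" assume "b \<in> Basis"
  then obtain i u where u: "u \<in> (Basis :: real set)" and b: "b = axis i u" unfolding Basis_vec_def by blast
  have u1: "u = 1" using u by simp
  have "(\<lambda>x. (indicator S x *\<^sub>R w x) \<bullet> b) = (\<lambda>x. indicator S x *\<^sub>R (w x $ i))"
    unfolding b u1 cart_eq_inner_axis[symmetric] vector_scaleR_component ..
  then show "(\<lambda>x. (indicator S x *\<^sub>R w x) \<bullet> b) \<in> borel_measurable lborel"
    using assms[of i] unfolding set_borel_measurable_def by simp
qed

lemma L2v_integrable:
  fixes w :: "real \<Rightarrow> real^'a::finite"
  assumes "L2v T w"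
  shows "w integrable_on {0..T}" "(\<lambda>s. norm (w s)) integrable_on {0..T}"
proof -
  have m: "set_borel_measurable lborel {0..T} w"
    using assms unfolding L2v_def L2on_def by (intro sbm_vec) auto
  have "set_integrable lborel {0..T} (\<lambda>s. \<Sum>i\<in>UNIV. \<bar>w s $ i\<bar>)"
    using assms unfolding L2v_def by (intro set_integrable_sum set_integrable_abs L2on_L1) auto
  then have n: "set_integrable lborel {0..T} (\<lambda>s. norm (w s))"
  proof (rule set_integrable_bound)
    have "(\<lambda>x. indicator {0..T} x *\<^sub>R norm (w x)) = (\<lambda>x. norm (indicator {0..T} x *\<^sub>R w x))"
      by (auto simp: indicator_def)
    then show "set_borel_measurable lborel {0..T} (\<lambda>s. norm (w s))"
      using measurable_compose[OF m[unfolded set_borel_measurable_def] borel_measurable_norm]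
      unfolding set_borel_measurable_def by simp
    show "AE x in lborel. x \<in> {0..T} \<longrightarrow> norm (norm (w x)) \<le> norm (\<Sum>i\<in>UNIV. \<bar>w x $ i\<bar>)"
    proof (intro AE_I2 impI)
      fix x
      have "norm (w x) \<le> (\<Sum>i\<in>UNIV. \<bar>w x $ i\<bar>)" by (rule norm_le_l1_cart)
      also have "\<dots> \<le> norm (\<Sum>i\<in>UNIV. \<bar>w x $ i\<bar>)" by simp
      finally show "norm (norm (w x)) \<le> norm (\<Sum>i\<in>UNIV. \<bar>w x $ i\<bar>)" by simp
    qed
  qed
  have "set_integrable lborel {0..T} w"
    by (rule set_integrable_bound[OF n m]) auto
  then show "w integrable_on {0..T}" by (rule set_borel_integral_eq_integral(1))
  show "(\<lambda>s. norm (w s)) integrable_on {0..T}" by (rule set_borel_integral_eq_integral(1)[OF n])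
qed



lemma sum_UNIV_sum:
  "sum g (UNIV :: ('a::finite + 'b::finite) set) = (\<Sum>i\<in>UNIV. g (Inl i)) + (\<Sum>j\<in>UNIV. g (Inr j))"
proof -
  have "sum g (UNIV :: ('a + 'b) set) = sum g (UNIV <+> UNIV)" by simp
  also have "\<dots> = (\<Sum>i\<in>UNIV. g (Inl i)) + (\<Sum>j\<in>UNIV. g (Inr j))"
    by (subst sum.Plus) (auto simp: comp_def)
  finally show ?thesis .
qed

lemma inner_transpose_mv: "y \<bullet> (transpose M *v z) = (M *v y) \<bullet> (z::real^'a::finite)"
  by (metis dot_lmul_matrix vector_transpose_matrix)

definition zz :: "real^'k::finite \<Rightarrow> real^'c::finite \<Rightarrow> real^('k + 'c)" where
  "zz x v = (\<chi> a. case a of Inl i \<Rightarrow> x $ i | Inr j \<Rightarrow> v $ j)"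

lemma inner_zz: "zz x v \<bullet> w = x \<bullet> (\<chi> i. w $ Inl i) + v \<bullet> (\<chi> j. w $ Inr j)"
  by (simp add: zz_def inner_vec_def sum_UNIV_sum)

lemma lmi_Inl:
  "(\<chi> i. (lmi_block A B P Pm *v zz x v) $ Inl i) = (transpose A ** P + P ** A) *v x + (P ** B) *v v"
  by (simp add: vec_eq_iff lmi_block_def matrix_vector_mult_def sum_UNIV_sum zz_def)

lemma lmi_Inr:
  "(\<chi> j. (lmi_block A B P Pm *v zz x v) $ Inr j) = (transpose B ** P) *v x - kron_I Pm *v v"
  by (simp add: vec_eq_iff lmi_block_def matrix_vector_mult_def sum_UNIV_sum zz_def sum_negf)

lemma lmi_quad:
  assumes P: "transpose P = P"
  shows "zz x v \<bullet> (lmi_block A B P Pm *v zz x v) = 2 * (x \<bullet> (P *v (A *v x + B *v v))) - v \<bullet> (kron_I Pm *v v)"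
proof -
  have 1: "x \<bullet> ((transpose A ** P) *v x) = x \<bullet> (P *v (A *v x))"
  proof -
    have "x \<bullet> ((transpose A ** P) *v x) = x \<bullet> (transpose A *v (P *v x))"
      by (simp only: matrix_vector_mul_assoc)
    also have "\<dots> = (A *v x) \<bullet> (P *v x)" by (rule inner_transpose_mv)
    also have "\<dots> = (A *v x) \<bullet> (transpose P *v x)" using P by simp
    also have "\<dots> = (P *v (A *v x)) \<bullet> x" by (rule inner_transpose_mv)
    also have "\<dots> = x \<bullet> (P *v (A *v x))" by (rule inner_commute)
    finally show ?thesis .
  qed
  have 2: "v \<bullet> ((transpose B ** P) *v x) = x \<bullet> (P *v (B *v v))"
  proof -
    have "v \<bullet> ((transpose B ** P) *v x) = v \<bullet> (transpose B *v (P *v x))"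
      by (simp only: matrix_vector_mul_assoc)
    also have "\<dots> = (B *v v) \<bullet> (P *v x)" by (rule inner_transpose_mv)
    also have "\<dots> = (B *v v) \<bullet> (transpose P *v x)" using P by simp
    also have "\<dots> = (P *v (B *v v)) \<bullet> x" by (rule inner_transpose_mv)
    also have "\<dots> = x \<bullet> (P *v (B *v v))" by (rule inner_commute)
    finally show ?thesis .
  qed
  show ?thesis
    unfolding inner_zz lmi_Inl lmi_Inr
    using 1 2
    by (simp add: matrix_vector_mult_add_rdistrib inner_add_right inner_diff_right
        matrix_vector_mul_assoc[symmetric] matrix_vector_right_distrib)
qed

lemma hcat_zz: "hcat C D *v zz x v = C *v x + D *v v"
  by (simp add: vec_eq_iff hcat_def matrix_vector_mult_def sum_UNIV_sum zz_def)

lemma VMV_quad: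
  "zz x v \<bullet> ((transpose (hcat C D) ** M ** hcat C D) *v zz x v) = (C *v x + D *v v) \<bullet> (M *v (C *v x + D *v v))"
proof -
  have "(transpose (hcat C D) ** M ** hcat C D) *v zz x v = transpose (hcat C D) *v (M *v (hcat C D *v zz x v))"
    by (simp only: matrix_vector_mul_assoc matrix_mul_assoc)
  then show ?thesis by (simp only: inner_transpose_mv hcat_zz)
qed

lemma delta_mult: "(c * (if i = j then 1 else 0)) * (y::real) = (if i = j then c * y else 0)"
  by simp

lemma kron_mv:
  "kron_I Pm *v stack a b = stack (Pm$1$1 *\<^sub>R a + Pm$1$2 *\<^sub>R b) (Pm$2$1 *\<^sub>R a + Pm$2$2 *\<^sub>R b)"
  unfolding vec_eq_iff
proof
  fix k :: "'a + 'a"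
  show "(kron_I Pm *v stack a b) $ k = stack (Pm$1$1 *\<^sub>R a + Pm$1$2 *\<^sub>R b) (Pm$2$1 *\<^sub>R a + Pm$2$2 *\<^sub>R b) $ k"
    by (cases k) (simp_all add: kron_I_def stack_def blk_def idx_def matrix_vector_mult_def sum_UNIV_sum delta_mult sum.delta)
qed

lemma inner_stack: "stack a b \<bullet> stack c d = a \<bullet> c + b \<bullet> d"
  by (simp add: stack_def inner_vec_def sum_UNIV_sum)

lemma kron_quad:
  "stack a b \<bullet> (kron_I Pm *v stack a b) =
     Pm$1$1 * (a \<bullet> a) + Pm$1$2 * (a \<bullet> b) + Pm$2$1 * (b \<bullet> a) + Pm$2$2 * (b \<bullet> b)"
  unfolding kron_mv inner_stack by (simp add: inner_add_right algebra_simps)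


lemma energy:
  fixes P :: "real^'k::finite^'k" and f x :: "real \<Rightarrow> real^'k" and T :: real
  assumes P: "transpose P = P" and T: "0 \<le> T"
    and fi: "\<And>i. set_integrable lborel {0..T} (\<lambda>s. f s $ i)"
    and xf: "\<And>s i. s \<in> {0..T} \<Longrightarrow> x s $ i = (LINT r:{0..s}|lborel. f r $ i)"
  shows "set_integrable lborel {0..T} (\<lambda>s. x s \<bullet> (P *v f s))"
    and "(LINT s:{0..T}|lborel. x s \<bullet> (P *v f s)) * 2 = x T \<bullet> (P *v x T)"
proof -
  define X where "X = (\<lambda>i s. LINT r:{0..s}|lborel. f r $ i)"
  have BP2: "set_integrable lborel {0..T} (\<lambda>s. X i s * f s $ j)" for i j
    using by_parts_L1(2)[OF fi[of i] fi[of j]] unfolding X_def .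
  have BP3: "(LINT s:{0..T}|lborel. f s $ i * X j s) + (LINT s:{0..T}|lborel. X i s * f s $ j) = X i T * X j T" for i j
    using by_parts_L1(3)[OF fi[of i] fi[of j]] unfolding X_def .
  define I where "I = (\<lambda>i j. LINT s:{0..T}|lborel. X i s * f s $ j)"
  have Psym: "P $ j $ i = P $ i $ j" for i j
    using P by (metis transpose_def vec_lambda_beta)
  have pw: "x s \<bullet> (P *v f s) = (\<Sum>i\<in>UNIV. \<Sum>j\<in>UNIV. P $ i $ j * (X i s * f s $ j))" if "s \<in> {0..T}" for s
    using xf[OF that] unfolding X_def
    by (simp add: inner_vec_def matrix_vector_mult_def sum_distrib_left mult_ac)
  have int2: "set_integrable lborel {0..T} (\<lambda>s. \<Sum>i\<in>UNIV. \<Sum>j\<in>UNIV. P $ i $ j * (X i s * f s $ j))"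
    by (intro set_integrable_sum set_integrable_mult_right BP2) auto
  show "set_integrable lborel {0..T} (\<lambda>s. x s \<bullet> (P *v f s))"
    using int2 by (rule set_integrable_cong[THEN iffD2, rotated 3]) (auto simp: pw)
  have "(LINT s:{0..T}|lborel. x s \<bullet> (P *v f s)) = (LINT s:{0..T}|lborel. \<Sum>i\<in>UNIV. \<Sum>j\<in>UNIV. P $ i $ j * (X i s * f s $ j))"
    by (rule set_lebesgue_integral_cong) (auto simp: pw)
  also have "\<dots> = (\<Sum>i\<in>UNIV. \<Sum>j\<in>UNIV. P $ i $ j * I i j)"
    unfolding I_def
    by (subst set_integral_sum) (auto intro!: set_integrable_sum set_integrable_mult_right BP2 sum.cong
        simp: set_integral_sum set_integrable_mult_right BP2)
  finally have L: "(LINT s:{0..T}|lborel. x s \<bullet> (P *v f s)) = (\<Sum>i\<in>UNIV. \<Sum>j\<in>UNIV. P $ i $ j * I i j)" .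
  have BPe: "I j i + I i j = X i T * X j T" for i j
  proof -
    have "(LINT s:{0..T}|lborel. f s $ i * X j s) = I j i"
      unfolding I_def by (simp add: mult.commute)
    then show ?thesis using BP3[of i j] unfolding I_def by simp
  qed
  have xT: "x T $ i = X i T" for i using xf[of T i] T unfolding X_def by simp
  have "x T \<bullet> (P *v x T) = (\<Sum>i\<in>UNIV. \<Sum>j\<in>UNIV. P $ i $ j * (X i T * X j T))"
    by (simp add: inner_vec_def matrix_vector_mult_def sum_distrib_left mult_ac xT)
  also have "\<dots> = (\<Sum>i\<in>UNIV. \<Sum>j\<in>UNIV. P $ i $ j * I j i) + (\<Sum>i\<in>UNIV. \<Sum>j\<in>UNIV. P $ i $ j * I i j)"
    by (simp add: BPe[symmetric] distrib_left sum.distrib)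
  also have "(\<Sum>i\<in>UNIV. \<Sum>j\<in>UNIV. P $ i $ j * I j i) = (\<Sum>i\<in>UNIV. \<Sum>j\<in>UNIV. P $ i $ j * I i j)"
    by (subst sum.swap) (simp add: Psym)
  finally show "(LINT s:{0..T}|lborel. x s \<bullet> (P *v f s)) * 2 = x T \<bullet> (P *v x T)"
    unfolding L by simp
qed



lemma S_region_iff:
  assumes "Pm$2$1 = Pm$1$2"
  shows "z \<in> S_region Pm \<longleftrightarrow> 0 \<le> Pm$1$1 + 2 * Pm$1$2 * Re z + Pm$2$2 * ((Re z)\<^sup>2 + (Im z)\<^sup>2)"
  using assms by (simp add: S_region_def sum_2 vector_2 algebra_simps power2_eq_square)

lemma final_alg:
  fixes a b c :: real and Pm :: "real^2^2"
  assumes sym: "Pm$2$1 = Pm$1$2" and a: "a > 0" and b: "b \<ge> 0" and cs: "c\<^sup>2 \<le> a * b"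
    and key: "0 \<le> Pm$1$1 * a + 2 * Pm$1$2 * c + Pm$2$2 * b" and s: "s \<in> {1, -1}"
  shows "complex_of_real (real_of_ereal (if sqrt a \<noteq> 0 then ereal (sqrt b / sqrt a)
               else if sqrt b = 0 then 0 else \<infinity>))
       * cis (s * (if sqrt a \<noteq> 0 \<and> sqrt b \<noteq> 0 then arccos (c / (sqrt a * sqrt b)) else 0)) \<in> S_region Pm"
proof (cases "b = 0")
  case True
  then have "c = 0" using cs by simp
  then have "0 \<le> Pm$1$1 * a" using key True by simp
  then have "0 \<le> Pm$1$1" using a by (simp add: zero_le_mult_iff)
  then show ?thesis using True a by (simp add: S_region_iff[OF sym])
next
  case False
  then have bp: "b > 0" using b by simp
  define r where "r = sqrt b / sqrt a"
  define \<theta> where "\<theta> = arccos (c / (sqrt a * sqrt b))"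
  have sab: "sqrt a * sqrt b > 0" using a bp by simp
  have "\<bar>c\<bar> \<le> sqrt a * sqrt b"
  proof -
    have "\<bar>c\<bar> = sqrt (c\<^sup>2)" by simp
    also have "\<dots> \<le> sqrt (a * b)" using cs by (rule real_sqrt_le_mono)
    finally show ?thesis by (simp add: real_sqrt_mult)
  qed
  then have c1: "-1 \<le> c / (sqrt a * sqrt b)" "c / (sqrt a * sqrt b) \<le> 1"
    using sab by (auto simp: divide_simps abs_le_iff)
  have cos: "cos (s * \<theta>) = c / (sqrt a * sqrt b)"
    using s c1 unfolding \<theta>_def by (auto simp: cos_arccos)
  have z: "complex_of_real (real_of_ereal (if sqrt a \<noteq> 0 then ereal (sqrt b / sqrt a)
               else if sqrt b = 0 then 0 else \<infinity>))
       * cis (s * (if sqrt a \<noteq> 0 \<and> sqrt b \<noteq> 0 then arccos (c / (sqrt a * sqrt b)) else 0))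
       = complex_of_real r * cis (s * \<theta>)"
    using a bp unfolding r_def \<theta>_def by simp
  have re: "Re (complex_of_real r * cis (s * \<theta>)) = c / a"
  proof -
    have "Re (complex_of_real r * cis (s * \<theta>)) = r * (c / (sqrt a * sqrt b))" by (simp add: cos)
    also have "\<dots> = c / (sqrt a * sqrt a)" unfolding r_def using a bp by (simp add: field_simps)
    also have "\<dots> = c / a" using a by simp
    finally show ?thesis .
  qed
  have nm: "(Re (complex_of_real r * cis (s * \<theta>)))\<^sup>2 + (Im (complex_of_real r * cis (s * \<theta>)))\<^sup>2 = b / a"
  proof -
    have e1: "Re (complex_of_real r * cis (s * \<theta>)) = r * cos (s * \<theta>)" by simp
    have e2: "Im (complex_of_real r * cis (s * \<theta>)) = r * sin (s * \<theta>)" by simp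
    have "(Re (complex_of_real r * cis (s * \<theta>)))\<^sup>2 + (Im (complex_of_real r * cis (s * \<theta>)))\<^sup>2 = r\<^sup>2"
      unfolding e1 e2 power_mult_distrib distrib_left[symmetric] sin_cos_squared_add2 by simp
    also have "\<dots> = b / a" unfolding r_def using a bp by (simp add: power_divide)
    finally show ?thesis .
  qed
  have "0 \<le> (Pm$1$1 * a + 2 * Pm$1$2 * c + Pm$2$2 * b) / a" using key a by simp
  also have "(Pm$1$1 * a + 2 * Pm$1$2 * c + Pm$2$2 * b) / a = Pm$1$1 + 2 * Pm$1$2 * (c / a) + Pm$2$2 * (b / a)"
    using a by (simp add: field_simps)
  finally show ?thesis unfolding z S_region_iff[OF sym] nm unfolding re .
qed



lemma set_int_nonneg:
  fixes f :: "'a \<Rightarrow> real"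
  assumes "\<And>t. t \<in> A \<Longrightarrow> 0 \<le> f t"
  shows "0 \<le> (LINT t:A|M. f t)"
  unfolding set_lebesgue_integral_def
  by (rule Bochner_Integration.integral_nonneg) (use assms in \<open>auto simp: indicator_def\<close>)

lemma quad_cs:
  fixes A B C :: real
  assumes q: "\<And>l. 0 \<le> A - 2 * l * C + l\<^sup>2 * B" and B: "0 \<le> B"
  shows "C\<^sup>2 \<le> A * B"
proof (cases "B = 0")
  case True
  have "C = 0"
  proof (rule ccontr)
    assume "C \<noteq> 0"
    have "0 \<le> A - 2 * ((A + 1) / (2 * C)) * C" using q[of "(A + 1) / (2 * C)"] True by simp
    also have "\<dots> = -1" using \<open>C \<noteq> 0\<close> by (simp add: field_simps)
    finally show False by simp
  qed
  then show ?thesis using True by simp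
next
  case False
  then have Bp: "B > 0" using B by simp
  have "0 \<le> A - 2 * (C / B) * C + (C / B)\<^sup>2 * B" by (rule q)
  also have "\<dots> = A - C\<^sup>2 / B" using Bp by (simp add: field_simps power2_eq_square)
  finally have "C\<^sup>2 / B \<le> A" by simp
  then show ?thesis using Bp by (simp add: field_simps mult.commute)
qed

lemma CS_L2:
  fixes p q :: "real \<Rightarrow> real^'n::finite"
  assumes p: "L2v T p" and q: "L2v T q"
  shows "(LINT t:{0..T}|lborel. p t \<bullet> q t)\<^sup>2 \<le> (LINT t:{0..T}|lborel. p t \<bullet> p t) * (LINT t:{0..T}|lborel. q t \<bullet> q t)"
proof (rule quad_cs)
  show "0 \<le> (LINT t:{0..T}|lborel. q t \<bullet> q t)" by (rule set_int_nonneg) simp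
  fix l :: real
  have ipp: "set_integrable lborel {0..T} (\<lambda>t. p t \<bullet> p t)" by (rule L2v_inner[OF p p])
  have ipq: "set_integrable lborel {0..T} (\<lambda>t. p t \<bullet> q t)" by (rule L2v_inner[OF p q])
  have iqq: "set_integrable lborel {0..T} (\<lambda>t. q t \<bullet> q t)" by (rule L2v_inner[OF q q])
  have pw: "(p t - l *\<^sub>R q t) \<bullet> (p t - l *\<^sub>R q t) = p t \<bullet> p t - 2 * l * (p t \<bullet> q t) + l\<^sup>2 * (q t \<bullet> q t)" for t
    by (simp add: inner_diff_left inner_diff_right inner_commute power2_eq_square algebra_simps)
  have "0 \<le> (LINT t:{0..T}|lborel. (p t - l *\<^sub>R q t) \<bullet> (p t - l *\<^sub>R q t))" by (rule set_int_nonneg) simp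
  also have "\<dots> = (LINT t:{0..T}|lborel. p t \<bullet> p t - (2 * l) * (p t \<bullet> q t) + l\<^sup>2 * (q t \<bullet> q t))"
    unfolding pw by (simp add: mult.assoc)
  also have "\<dots> = (LINT t:{0..T}|lborel. p t \<bullet> p t) - 2 * l * (LINT t:{0..T}|lborel. p t \<bullet> q t) + l\<^sup>2 * (LINT t:{0..T}|lborel. q t \<bullet> q t)"
    using ipp ipq iqq by (simp add: set_integral_add set_integral_diff set_integrable_mult_right)
  finally show "0 \<le> (LINT t:{0..T}|lborel. p t \<bullet> p t) - 2 * l * (LINT t:{0..T}|lborel. p t \<bullet> q t) + l\<^sup>2 * (LINT t:{0..T}|lborel. q t \<bullet> q t)" .
qed

lemma L2e_L2v:
  fixes u :: "real \<Rightarrow> real^'n::finite"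
  assumes u: "u \<in> L2e" and T: "0 \<le> T"
  shows "L2v T u"
  unfolding L2v_def L2on_def
proof (intro allI conjI)
  fix i
  have um: "u \<in> borel_measurable lborel" using u unfolding L2e_def by simp
  have "(\<lambda>t. u t \<bullet> axis i 1) \<in> borel_measurable lborel"
  proof -
    have "axis i 1 \<in> (Basis :: (real^'n) set)" unfolding Basis_vec_def by auto
    then show ?thesis using borel_measurable_euclidean_space[THEN iffD1, OF um] by blast
  qed
  then have cm[measurable]: "(\<lambda>t. u t $ i) \<in> borel_measurable lborel"
    by (simp add: cart_eq_inner_axis[symmetric])
  show sm: "set_borel_measurable lborel {0..T} (\<lambda>t. u t $ i)"
    unfolding set_borel_measurable_def by measurable
  show "set_integrable lborel {0..T} (\<lambda>t. (u t $ i)\<^sup>2)"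
  proof (rule set_integrable_bound)
    show "set_integrable lborel {0..T} (\<lambda>t. (norm (u t))\<^sup>2)" using u T unfolding L2e_def by simp
    show "set_borel_measurable lborel {0..T} (\<lambda>t. (u t $ i)\<^sup>2)"
      unfolding set_borel_measurable_def by measurable
    show "AE x in lborel. x \<in> {0..T} \<longrightarrow> norm ((u x $ i)\<^sup>2) \<le> norm ((norm (u x))\<^sup>2)"
    proof (intro AE_I2 impI)
      fix x
      have "\<bar>u x $ i\<bar>\<^sup>2 \<le> (norm (u x))\<^sup>2"
        by (rule power_mono[OF component_le_norm_cart]) simp
      then show "norm ((u x $ i)\<^sup>2) \<le> norm ((norm (u x))\<^sup>2)" by simp
    qed
  qed
qed

lemma L2v_diff: "L2v T p \<Longrightarrow> L2v T q \<Longrightarrow> L2v T (\<lambda>t. p t - q t)"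
proof -
  assume p: "L2v T p" and q: "L2v T q"
  have "L2on T (\<lambda>t. p t $ i + (-1) * q t $ i)" for i
    using p q unfolding L2v_def by (intro L2on_add L2on_scale) auto
  then show ?thesis unfolding L2v_def by simp
qed

lemma L2v_stack: "L2v T p \<Longrightarrow> L2v T q \<Longrightarrow> L2v T (\<lambda>t. stack (p t) (q t))"
  unfolding L2v_def
proof
  fix k :: "'a + 'a"
  assume "\<forall>i. L2on T (\<lambda>t. p t $ i)" "\<forall>i. L2on T (\<lambda>t. q t $ i)"
  then show "L2on T (\<lambda>t. stack (p t) (q t) $ k)"
    by (cases k) (simp_all add: stack_def)
qed

lemma l2inner_trunc:
  "l2inner (trunc T p) (trunc T q) = (LINT t:{0..T}|lborel. p t \<bullet> q t)"
  unfolding l2inner_def set_lebesgue_integral_def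
  by (rule Bochner_Integration.integral_cong) (auto simp: trunc_def indicator_def)

lemma int_on_all:
  fixes t :: real and f :: "real \<Rightarrow> 'b::real_normed_vector"
  assumes "\<And>t. 0 \<le> t \<Longrightarrow> f integrable_on {0..t}"
  shows "f integrable_on {0..t}"
proof (cases "0 \<le> t")
  case False
  then have "{0..t} = {}" by simp
  then show ?thesis using integrable_on_empty by metis
qed (use assms in auto)



lemma key:
  fixes H :: "(real \<Rightarrow> real^'n::finite) \<Rightarrow> (real \<Rightarrow> real^'n)"
    and M :: "real^'m::finite^'m"
    and A :: "real^'k::finite^'k" and B :: "real^('n + 'n)^'k"
    and C :: "real^'k^'m" and D :: "real^('n + 'n)^'m"
    and Pm :: "real^2^2" and P :: "real^'k^'k" and \<tau> :: real
  assumes sys: "is_system H" and iqc: "hard_incr_IQC H M A B C D"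
    and P: "transpose P = P" and psd: "psd P" and tau: "\<tau> > 0"
    and lmi: "nsd (lmi_block A B P Pm + \<tau> *\<^sub>R (transpose (hcat C D) ** M ** hcat C D))"
    and g1: "(u1, y1) \<in> ext_graph H" and g2: "(u2, y2) \<in> ext_graph H" and T: "T > 0"
  shows "0 \<le> (LINT t:{0..T}|lborel. stack (u1 t - u2 t) (y1 t - y2 t) \<bullet> (kron_I Pm *v stack (u1 t - u2 t) (y1 t - y2 t)))"
proof -
  have u1: "u1 \<in> L2e" "y1 = H u1" using g1 unfolding ext_graph_def by auto
  have u2: "u2 \<in> L2e" "y2 = H u2" using g2 unfolding ext_graph_def by auto
  have y1: "y1 \<in> L2e" using sys u1 unfolding is_system_def by auto
  have y2: "y2 \<in> L2e" using sys u2 unfolding is_system_def by auto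
  define v where "v = (\<lambda>t. stack (u1 t - u2 t) (y1 t - y2 t))"
  have Lv: "L2v T' v" if "0 \<le> T'" for T'
    unfolding v_def using that by (intro L2v_stack L2v_diff L2e_L2v u1 u2 y1 y2)
  have bi: "(\<lambda>s. B *v v s) integrable_on {0..t}" for t
    by (rule int_on_all) (rule L2v_integrable(1)[OF L2v_mv[OF Lv]])
  have nbi: "(\<lambda>s. norm (B *v v s)) integrable_on {0..t}" for t
    by (rule int_on_all) (rule L2v_integrable(2)[OF L2v_mv[OF Lv]])
  obtain x where x0: "x 0 = 0" and xint: "\<And>t. 0 \<le> t \<Longrightarrow> ((\<lambda>s. A *v x s + B *v v s) has_integral x t) {0..t}"
    using lti_exists[OF bi nbi] by blast
  define f where "f = (\<lambda>s. A *v x s + B *v v s)"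
  define g where "g = (\<lambda>t. C *v x t + D *v v t)"
  have "lti_output A B C D v g"
    unfolding lti_output_def lti_state_def using x0 xint by (auto simp: g_def)
  then have iq: "0 \<le> (LINT t:{0..T}|lborel. g t \<bullet> (M *v g t))"
    using iqc g1 g2 T unfolding hard_incr_IQC_def v_def by blast
  have xcont: "continuous_on {0..T'} x" if T': "0 \<le> T'" for T'
  proof -
    have fi: "f integrable_on {0..T'}" using xint[OF T'] unfolding f_def by blast
    have c: "continuous_on {0..T'} (\<lambda>t. integral {0..t} f)" by (rule indefinite_integral_continuous_1[OF fi])
    have "\<And>t. t \<in> {0..T'} \<Longrightarrow> integral {0..t} f = x t"
      using xint unfolding f_def by (simp add: integral_unique)
    then show ?thesis using continuous_on_cong[THEN iffD1, OF refl _ c] by blast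
  qed
  have Lx: "L2v T' x" if "0 \<le> T'" for T' using L2v_cont[OF xcont[OF that]] .
  have Lf: "L2v T' f" if "0 \<le> T'" for T'
    unfolding f_def using Lx[OF that] Lv[OF that] by (intro L2v_add L2v_mv)
  have Lg: "L2v T g" unfolding g_def using Lx Lv T by (intro L2v_add L2v_mv) auto
  have xf: "x s $ i = (LINT r:{0..s}|lborel. f r $ i)" if s: "s \<in> {0..T}" for s i
  proof -
    have "(f has_integral x s) {0..s}" using xint[of s] s unfolding f_def by simp
    from has_integral_linear[OF this bounded_linear_vec_nth[of i]]
    have h: "((\<lambda>r. f r $ i) has_integral x s $ i) {0..s}" by (simp add: o_def)
    have si: "set_integrable lborel {0..s} (\<lambda>r. f r $ i)"
      using Lf[of s] s unfolding L2v_def by (auto intro: L2on_L1)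
    show ?thesis using set_borel_integral_eq_integral(2)[OF si] h by (simp add: integral_unique)
  qed
  have fi: "set_integrable lborel {0..T} (\<lambda>s. f s $ i)" for i
    using Lf[of T] T unfolding L2v_def by (auto intro: L2on_L1)
  have T0: "0 \<le> T" using T by simp
  note EN = energy[OF P T0 fi xf]
  have pos: "0 \<le> x T \<bullet> (P *v x T)" using psd unfolding psd_def by simp
  have pw: "2 * (x t \<bullet> (P *v f t)) + \<tau> * (g t \<bullet> (M *v g t)) \<le> v t \<bullet> (kron_I Pm *v v t)" for t
  proof -
    let ?z = "zz (x t) (v t)"
    have "?z \<bullet> ((lmi_block A B P Pm + \<tau> *\<^sub>R (transpose (hcat C D) ** M ** hcat C D)) *v ?z) \<le> 0"
      using lmi unfolding nsd_def by blast
    moreover have "?z \<bullet> ((lmi_block A B P Pm + \<tau> *\<^sub>R (transpose (hcat C D) ** M ** hcat C D)) *v ?z)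
        = ?z \<bullet> (lmi_block A B P Pm *v ?z) + \<tau> * (?z \<bullet> ((transpose (hcat C D) ** M ** hcat C D) *v ?z))"
      by (simp only: matrix_vector_mult_add_rdistrib scaleR_matrix_vector_assoc[symmetric]
          inner_add_right inner_scaleR_right)
    ultimately show ?thesis unfolding lmi_quad[OF P] VMV_quad f_def g_def by simp
  qed
  have iP: "set_integrable lborel {0..T} (\<lambda>t. x t \<bullet> (P *v f t))" by (rule EN(1))
  have iM: "set_integrable lborel {0..T} (\<lambda>t. g t \<bullet> (M *v g t))" by (rule L2v_inner[OF Lg L2v_mv[OF Lg]])
  have iK: "set_integrable lborel {0..T} (\<lambda>t. v t \<bullet> (kron_I Pm *v v t))"
    by (rule L2v_inner[OF Lv[OF T0] L2v_mv[OF Lv[OF T0]]])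
  have int1: "set_integrable lborel {0..T} (\<lambda>t. 2 * (x t \<bullet> (P *v f t)) + \<tau> * (g t \<bullet> (M *v g t)))"
    using iP iM by auto
  have "(LINT t:{0..T}|lborel. 2 * (x t \<bullet> (P *v f t)) + \<tau> * (g t \<bullet> (M *v g t)))
      \<le> (LINT t:{0..T}|lborel. v t \<bullet> (kron_I Pm *v v t))"
    by (rule set_integral_mono[OF int1 iK pw])
  moreover have "(LINT t:{0..T}|lborel. 2 * (x t \<bullet> (P *v f t)) + \<tau> * (g t \<bullet> (M *v g t)))
      = 2 * (LINT t:{0..T}|lborel. x t \<bullet> (P *v f t)) + \<tau> * (LINT t:{0..T}|lborel. g t \<bullet> (M *v g t))"
    using iP iM by (simp add: set_integral_add)
  moreover have "0 \<le> 2 * (LINT t:{0..T}|lborel. x t \<bullet> (P *v f t)) + \<tau> * (LINT t:{0..T}|lborel. g t \<bullet> (M *v g t))"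
    using EN(2) pos iq tau by (simp add: mult.commute)
  ultimately show ?thesis unfolding v_def by linarith
qed



theorem theorem2:
  fixes H :: "(real \<Rightarrow> real^'n::finite) \<Rightarrow> (real \<Rightarrow> real^'n)"
    and M :: "real^'m::finite^'m"
    and A :: "real^'k::finite^'k" and B :: "real^('n + 'n)^'k"
    and C :: "real^'k^'m" and D :: "real^('n + 'n)^'m"
    and Pm :: "real^2^2" and P :: "real^'k^'k" and \<tau> :: real
  assumes "is_system H" and "causal H"
    and "transpose M = M"
    and "hurwitz A"
    and "hard_incr_IQC H M A B C D"
    and "transpose Pm = Pm"
    and "transpose P = P" and "psd P"
    and "\<tau> > 0"
    and "nsd (lmi_block A B P Pm + \<tau> *\<^sub>R (transpose (hcat C D) ** M ** hcat C D))"
  shows "SRGe H \<subseteq> S_region Pm"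
proof
  fix z assume "z \<in> SRGe H"
  then have "\<exists>u1 y1 u2 y2 T s. z = complex_of_real (real_of_ereal (gain (trunc T (\<lambda>t. u1 t - u2 t)) (trunc T (\<lambda>t. y1 t - y2 t))))
               * cis (s * phase (trunc T (\<lambda>t. u1 t - u2 t)) (trunc T (\<lambda>t. y1 t - y2 t)))
    \<and> (u1, y1) \<in> ext_graph H \<and> (u2, y2) \<in> ext_graph H
    \<and> l2norm (trunc T (\<lambda>t. u1 t - u2 t)) \<noteq> 0 \<and> T > 0 \<and> s \<in> {1, -1}"
    by (simp only: SRGe_def mem_Collect_eq)
  then obtain u1 y1 u2 y2 T s where
    z: "z = complex_of_real (real_of_ereal (gain (trunc T (\<lambda>t. u1 t - u2 t)) (trunc T (\<lambda>t. y1 t - y2 t))))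
               * cis (s * phase (trunc T (\<lambda>t. u1 t - u2 t)) (trunc T (\<lambda>t. y1 t - y2 t)))"
    and g1: "(u1, y1) \<in> ext_graph H" and g2: "(u2, y2) \<in> ext_graph H"
    and nz: "l2norm (trunc T (\<lambda>t. u1 t - u2 t)) \<noteq> 0" and T: "T > 0" and s: "s \<in> {1, -1}"
    by (elim exE conjE)
  have u1: "u1 \<in> L2e" "y1 = H u1" using g1 unfolding ext_graph_def by auto
  have u2: "u2 \<in> L2e" "y2 = H u2" using g2 unfolding ext_graph_def by auto
  have y1: "y1 \<in> L2e" using assms(1) u1 unfolding is_system_def by auto
  have y2: "y2 \<in> L2e" using assms(1) u2 unfolding is_system_def by auto
  define du where "du = (\<lambda>t. u1 t - u2 t)"
  define dy where "dy = (\<lambda>t. y1 t - y2 t)"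
  have T0: "0 \<le> T" using T by simp
  have Ldu: "L2v T du" unfolding du_def using T0 by (intro L2v_diff L2e_L2v u1 u2)
  have Ldy: "L2v T dy" unfolding dy_def using T0 by (intro L2v_diff L2e_L2v y1 y2)
  define a where "a = (LINT t:{0..T}|lborel. du t \<bullet> du t)"
  define b where "b = (LINT t:{0..T}|lborel. dy t \<bullet> dy t)"
  define c where "c = (LINT t:{0..T}|lborel. du t \<bullet> dy t)"
  have na: "l2norm (trunc T du) = sqrt a" unfolding l2norm_def l2inner_trunc a_def ..
  have nb: "l2norm (trunc T dy) = sqrt b" unfolding l2norm_def l2inner_trunc b_def ..
  have nc: "l2inner (trunc T du) (trunc T dy) = c" unfolding l2inner_trunc c_def ..
  have a0: "0 \<le> a" unfolding a_def by (rule set_int_nonneg) simp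
  have b0: "0 \<le> b" unfolding b_def by (rule set_int_nonneg) simp
  have ap: "a > 0" using nz a0 unfolding du_def[symmetric] na by simp
  have cs: "c\<^sup>2 \<le> a * b" unfolding a_def b_def c_def by (rule CS_L2[OF Ldu Ldy])
  have sym: "Pm$2$1 = Pm$1$2"
  proof -
    have "(transpose Pm) $ 1 $ 2 = Pm $ 2 $ 1" by (simp add: transpose_def)
    then show ?thesis using assms(6) by simp
  qed
  have kq: "stack (du t) (dy t) \<bullet> (kron_I Pm *v stack (du t) (dy t))
      = Pm$1$1 * (du t \<bullet> du t) + (2 * Pm$1$2) * (du t \<bullet> dy t) + Pm$2$2 * (dy t \<bullet> dy t)" for t
    unfolding kron_quad sym by (simp add: inner_commute algebra_simps)
  have i1: "set_integrable lborel {0..T} (\<lambda>t. du t \<bullet> du t)" by (rule L2v_inner[OF Ldu Ldu])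
  have i2: "set_integrable lborel {0..T} (\<lambda>t. du t \<bullet> dy t)" by (rule L2v_inner[OF Ldu Ldy])
  have i3: "set_integrable lborel {0..T} (\<lambda>t. dy t \<bullet> dy t)" by (rule L2v_inner[OF Ldy Ldy])
  have "0 \<le> (LINT t:{0..T}|lborel. stack (du t) (dy t) \<bullet> (kron_I Pm *v stack (du t) (dy t)))"
    using key[OF assms(1) assms(5) assms(7) assms(8) assms(9) assms(10) g1 g2 T] unfolding du_def dy_def .
  also have "\<dots> = Pm$1$1 * a + 2 * Pm$1$2 * c + Pm$2$2 * b"
    unfolding kq a_def b_def c_def using i1 i2 i3 by (simp add: set_integral_add)
  finally have key0: "0 \<le> Pm$1$1 * a + 2 * Pm$1$2 * c + Pm$2$2 * b" .
  have "z = complex_of_real (real_of_ereal (if sqrt a \<noteq> 0 then ereal (sqrt b / sqrt a)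
               else if sqrt b = 0 then 0 else \<infinity>))
       * cis (s * (if sqrt a \<noteq> 0 \<and> sqrt b \<noteq> 0 then arccos (c / (sqrt a * sqrt b)) else 0))"
    unfolding z du_def[symmetric] dy_def[symmetric] gain_def phase_def na nb nc ..
  then show "z \<in> S_region Pm" using final_alg[OF sym ap b0 cs key0 s] by simp
qed

end
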